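(* Let $m$ be odd, $q=2^m$, $R=GR(4,m)$ with Teichmüller set $\mathcal{T}$, let $B\in\mathcal{T}$ with $B\ne0$, and let $d\in\mathbb{F}_q$. The number of quadruples $(X,Y,Z,W)\in\mathcal{T}^4$ satisfying $$X+Y-Z-W=2B,\qquad x^3+y^3+z^3+w^3=b^3d$$ is $2^m$ if $d=0$, is $2^{m+1}$ if $d\in M_1$, and is $0$ if $d\in M_0\cup M_3$.
   Context: $R=GR(4,m)=\mathbb{Z}_4[x]/(f(x))$ with $f$ monic of degree $m$ irreducible mod 2; $\mathcal{T}=\{0,1,\beta,\dots,\beta^{q-2}\}$ with $\beta\in R^*$ of order $q-1$; lower-case letters denote reductions mod 2 (in $\mathbb{F}_q$) of the corresponding elements of $\mathcal{T}$. For $c\in\mathbb{F}_q$ let $f_c(x)=x^3+x+c$, and for $i\in\{0,1,3\}$ let $M_i=\{c\in\mathbb{F}_q^*: f_c(x)=0 \text{ has exactly } i \text{ solutions in } \mathbb{F}_q\}$. *)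

theory Defs
  imports "HOL-Computational_Algebra.Polynomial" "HOL-Library.Numeral_Type" "HOL-Library.Z2"
begin

text \<open>GR(4,m) = Z_4[x]/(f) is represented by the canonical representatives,
  i.e. polynomials over Z_4 of degree < m, with equality in R being congruence modulo f.
  Likewise F_q = F_2[x]/(f mod 2) is represented by polynomials over F_2 of degree < m.\<close>

definition red2 :: "4 \<Rightarrow> bit" where
  "red2 c = of_int (Rep_bit0 c)"

definition redpoly :: "4 poly \<Rightarrow> bit poly" where
  "redpoly p = map_poly red2 p"

definition GR_carrier :: "nat \<Rightarrow> 4 poly set" where
  "GR_carrier m = {p. degree p < m}"

definition Fq_carrier :: "nat \<Rightarrow> bit poly set" where
  "Fq_carrier m = {p. degree p < m}"

definition GR_modulus :: "nat \<Rightarrow> 4 poly \<Rightarrow> bool" where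
  "GR_modulus m f \<longleftrightarrow> lead_coeff f = 1 \<and> degree f = m \<and> irreducible (redpoly f)"

definition GR_unit_of_order :: "4 poly \<Rightarrow> 4 poly \<Rightarrow> nat \<Rightarrow> bool" where
  "GR_unit_of_order f \<beta> n \<longleftrightarrow> (\<exists>u. f dvd (\<beta> * u - 1)) \<and> 0 < n \<and>
     f dvd (\<beta> ^ n - 1) \<and> (\<forall>k. 0 < k \<and> k < n \<longrightarrow> \<not> f dvd (\<beta> ^ k - 1))"

definition Teich :: "nat \<Rightarrow> 4 poly \<Rightarrow> 4 poly \<Rightarrow> 4 poly set" where
  "Teich m f \<beta> = {X \<in> GR_carrier m. X = 0 \<or> (\<exists>i < 2 ^ m - 1. f dvd (X - \<beta> ^ i))}"

definition Mset :: "nat \<Rightarrow> 4 poly \<Rightarrow> nat \<Rightarrow> bit poly set" where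
  "Mset m f i = {c \<in> Fq_carrier m. c \<noteq> 0 \<and>
      card {x \<in> Fq_carrier m. redpoly f dvd (x ^ 3 + x + c)} = i}"

end

theory Submission
  imports Defs "HOL-Computational_Algebra.Polynomial_Factorial"
begin


lemma four_cases: "(c::4) = 0 \<or> c = 1 \<or> c = 2 \<or> c = 3"
proof (induct c)
  case (of_int z)
  then have "z \<in> {0,1,2,3}" by auto
  then show ?case by auto
qed

lemma red2_vals [simp]: "red2 0 = 0" "red2 1 = 1"
  unfolding red2_def by (simp_all add: bit0.Rep_0 bit0.Rep_1)
lemma red2_numeral [simp]: "red2 (numeral w) = of_int (numeral w mod 4)"
  unfolding red2_def by (simp add: bit0.Rep_numeral)
lemma neg4 [simp]: "-(1::4) = 3" "-(2::4) = 2" "-(3::4) = 1" by simp_all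

lemma red2_add: "red2 (a + b) = red2 a + red2 b"
  using four_cases[of a] four_cases[of b] by auto

lemma red2_mult: "red2 (a * b) = red2 a * red2 b"
  using four_cases[of a] four_cases[of b] by auto

lemma red2_uminus: "red2 (- a) = red2 a"
  using four_cases[of a] by auto

lemma red2_zero_iff: "red2 a = 0 \<longleftrightarrow> 2 * a = 0"
  using four_cases[of a] by auto

lemma red2_zero_half: "red2 a = 0 \<Longrightarrow> a = 2 * (if a = 2 then 1 else 0)"
  using four_cases[of a] by auto

lemma four0: "(4::4 poly) = 0"
proof - have "(4::4) = 0" by simp then show ?thesis by (metis numeral_poly pCons_0_0) qed

lemma two0: "(2::bit poly) = 0" by (metis numeral_poly bit_2_eq_0 pCons_0_0)

lemma bminus: "-(p::bit poly) = p" by (simp add: poly_eq_iff)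
lemma bdiff: "(a::bit poly) - b = a + b" by (metis bminus diff_conv_add_uminus)
lemma bself: "(a::bit poly) + a = 0" by (metis two0 mult_2 mult_zero_left)

lemma redpoly_add: "redpoly (p + q) = redpoly p + redpoly q"
  unfolding redpoly_def by (simp add: poly_eq_iff coeff_map_poly red2_add)
lemma redpoly_uminus: "redpoly (- p) = redpoly p"
  unfolding redpoly_def by (simp add: poly_eq_iff coeff_map_poly red2_uminus)
lemma redpoly_diff: "redpoly (p - q) = redpoly p + redpoly q"
  by (metis diff_conv_add_uminus redpoly_add redpoly_uminus)
lemma redpoly_0 [simp]: "redpoly 0 = 0" unfolding redpoly_def by simp
lemma redpoly_1 [simp]: "redpoly 1 = 1" unfolding redpoly_def by simp
lemma redpoly_smult: "redpoly (smult c p) = smult (red2 c) (redpoly p)"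
  unfolding redpoly_def by (rule map_poly_smult) (simp_all add: red2_mult)
lemma redpoly_pCons: "redpoly (pCons c p) = pCons (red2 c) (redpoly p)"
  unfolding redpoly_def by (rule map_poly_pCons) simp
lemma redpoly_mult: "redpoly (p * q) = redpoly p * redpoly q"
  by (induct p) (simp_all add: redpoly_add redpoly_smult redpoly_pCons)
lemma redpoly_power: "redpoly (p ^ n) = redpoly p ^ n"
  by (induct n) (simp_all add: redpoly_mult)
lemma redpoly_2 [simp]: "redpoly 2 = 0"
  by (metis one_add_one redpoly_1 redpoly_add bself)

lemma coeff_2: "coeff (2 * p) n = 2 * coeff p n" by (metis coeff_add mult_2)
lemma redpoly_zero_iff: "redpoly p = 0 \<longleftrightarrow> 2 * p = 0"
  unfolding redpoly_def by (simp add: poly_eq_iff coeff_map_poly red2_zero_iff coeff_2)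

lemma redpoly_zero_half: assumes "redpoly p = 0" shows "\<exists>e. p = 2 * e"
proof
  show "p = 2 * map_poly (\<lambda>a. if a = 2 then 1 else 0) p"
  proof (rule poly_eqI)
    fix n
    have "red2 (coeff p n) = 0" using assms unfolding redpoly_def
      by (metis coeff_0 coeff_map_poly red2_vals(1))
    from red2_zero_half[OF this] show "coeff p n = coeff (2 * map_poly (\<lambda>a. if a = 2 then 1 else 0) p) n"
      by (simp add: coeff_2 coeff_map_poly)
  qed
qed

definition lift2 :: "bit poly \<Rightarrow> 4 poly" where "lift2 h = map_poly of_bit h"

lemma redpoly_lift2 [simp]: "redpoly (lift2 h) = h"
  unfolding redpoly_def lift2_def
  by (subst map_poly_map_poly) (auto intro!: map_poly_idI)

lemma dvd_redpoly: "f dvd p \<Longrightarrow> redpoly f dvd redpoly p"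
  by (auto simp: redpoly_mult)

lemma two_dvd_iff:
  assumes "redpoly f \<noteq> 0"
  shows "f dvd (2 * U) \<longleftrightarrow> redpoly f dvd redpoly U"
proof
  assume "f dvd 2 * U"
  then obtain G where G: "2 * U = f * G" by auto
  then have "redpoly f * redpoly G = 0" by (metis redpoly_mult redpoly_2 mult_zero_left)
  with assms have "redpoly G = 0" by simp
  then obtain G' where G': "G = 2 * G'" using redpoly_zero_half by blast
  have "2 * (U - f * G') = 0" using G G' by (simp add: algebra_simps)
  then have "redpoly (U - f * G') = 0" using redpoly_zero_iff by blast
  then have "redpoly U = redpoly f * redpoly G'" by (simp add: redpoly_diff redpoly_mult bself)
    (metis add.left_neutral bself add.assoc)
  then show "redpoly f dvd redpoly U" by simp
next
  assume "redpoly f dvd redpoly U"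
  then obtain h where h: "redpoly U = redpoly f * h" by auto
  have "redpoly (U - f * lift2 h) = 0" by (simp add: redpoly_diff redpoly_mult h bself)
  then have "2 * (U - f * lift2 h) = 0" using redpoly_zero_iff by blast
  then have "2 * U = f * (2 * lift2 h)" by (simp add: algebra_simps)
  then show "f dvd 2 * U" by simp
qed

lemma sq_ident: "((a::'a::comm_ring_1) + f*h + 2*e)^2 - a^2 = f * (2*a*h + f*h^2 + 4*h*e) + 4*(a*e+e^2)"
  by (simp add: power2_eq_square algebra_simps)

lemma sq_lift:
  assumes "redpoly f dvd redpoly (r - r')"
  shows "f dvd (r^2 - r'^2)"
proof -
  obtain h where h: "redpoly (r - r') = redpoly f * h" using assms by auto
  have "redpoly (r - r' - f * lift2 h) = 0"
    by (simp add: redpoly_diff redpoly_mult h[unfolded redpoly_diff] bself)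
  then obtain e where e: "r - r' - f * lift2 h = 2 * e" using redpoly_zero_half by blast
  then have r: "r = r' + f * lift2 h + 2 * e" by (simp add: algebra_simps)
  have "r^2 - r'^2 = f * (2*r'*lift2 h + f*(lift2 h)^2 + 4*lift2 h*e) + 4*(r'*e+e^2)"
    unfolding r by (rule sq_ident)
  then have "r^2 - r'^2 = f * (2*r'*lift2 h + f*(lift2 h)^2 + 4*lift2 h*e)"
    by (simp add: four0)
  then show ?thesis by (metis dvd_triv_left)
qed

lemma pow2_lift:
  assumes "redpoly f dvd redpoly (r - r')" "k \<ge> 1"
  shows "f dvd (r^(2^k) - r'^(2^k))"
  using assms(2)
proof (induct k rule: dec_induct)
  case base
  then show ?case using sq_lift[OF assms(1)] by simp
next
  case (step k)
  have "redpoly f dvd redpoly (r^(2^k) - r'^(2^k))" using dvd_redpoly[OF step(3)] .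
  from sq_lift[OF this] show ?case by (simp add: power_mult[symmetric] mult.commute)
qed




lemma card_F: "card (Fq_carrier m) = 2 ^ m" if "m \<ge> 1"
proof -
  let ?L = "{xs::bit list. set xs \<subseteq> UNIV \<and> length xs = m}"
  have u: "(UNIV :: bit set) = {0, 1}" by auto
  have fb: "finite (UNIV::bit set)" by (simp add: u)
  have c2: "card (UNIV::bit set) = 2" by (simp add: u)
  have cL: "card ?L = 2 ^ m" by (subst card_lists_length_eq) (simp_all add: c2 fb)
  have inj: "inj_on Poly ?L"
  proof (rule inj_onI)
    fix xs ys assume xs: "xs \<in> ?L" and ys: "ys \<in> ?L" and e: "Poly xs = Poly ys"
    have "\<And>i. nth_default 0 xs i = nth_default 0 ys i" using e by (metis coeff_Poly_eq)
    then show "xs = ys" using xs ys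
      by (intro nth_equalityI) (auto simp: nth_default_def split: if_splits, metis)
  qed
  have img: "Poly ` ?L = Fq_carrier m"
  proof
    show "Poly ` ?L \<subseteq> Fq_carrier m"
    proof
      fix p assume "p \<in> Poly ` ?L"
      then obtain xs where xs: "length xs = m" "p = Poly xs" by auto
      have "degree p \<le> m - 1"
        by (rule degree_le) (use xs that in \<open>auto simp: nth_default_def\<close>)
      then show "p \<in> Fq_carrier m" using that unfolding Fq_carrier_def by auto
    qed
  next
    show "Fq_carrier m \<subseteq> Poly ` ?L"
    proof
      fix p assume p: "p \<in> Fq_carrier m"
      have "p = Poly (map (coeff p) [0..<m])"
      proof (rule poly_eqI)
        fix n show "coeff p n = coeff (Poly (map (coeff p) [0..<m])) n"
          using p unfolding Fq_carrier_def
          by (auto simp: nth_default_def coeff_eq_0)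
      qed
      then show "p \<in> Poly ` ?L" by (intro image_eqI[of _ _ "map (coeff p) [0..<m]"]) auto
    qed
  qed
  show ?thesis using card_image[OF inj] img cL by simp
qed

context
  fixes m :: nat and f \<beta> :: "4 poly"
  assumes m1: "m \<ge> 1" and fmod: "GR_modulus m f" and ord: "GR_unit_of_order f \<beta> (2^m - 1)"
begin

lemma lf: "lead_coeff f = 1" and df: "degree f = m"
  using fmod unfolding GR_modulus_def by auto

lemma monic_dvd_deg: assumes "f dvd p" "p \<noteq> 0" shows "m \<le> degree p"
proof -
  obtain h where h: "p = f * h" using assms by auto
  have "h \<noteq> 0" using h assms by auto
  then have "coeff p (degree f + degree h) \<noteq> 0" unfolding h coeff_mult_degree_sum using lf by simp
  then have "degree f + degree h \<le> degree p" by (rule le_degree)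
  then show ?thesis using df by simp
qed

lemma carrier_eq: assumes "X \<in> GR_carrier m" "Y \<in> GR_carrier m" "f dvd (X - Y)" shows "X = Y"
proof (rule ccontr)
  assume "X \<noteq> Y"
  then have "m \<le> degree (X - Y)" using monic_dvd_deg assms(3) by auto
  moreover have "degree (X - Y) < m" using assms unfolding GR_carrier_def by (auto intro: degree_diff_less)
  ultimately show False by simp
qed

lemma not_dvd_1: "\<not> f dvd 1" using monic_dvd_deg[of 1] m1 by auto

lemma dvd_power_diff: "(a::'a::comm_ring_1) - b dvd a^n - b^n"
  by (metis power_diff_sumr2 dvd_triv_left)

lemma dvd_trans_diff: "f dvd (a - b) \<Longrightarrow> f dvd (a^n - b^n)"
  using dvd_power_diff dvd_trans by blast

lemma unit_beta: obtains u where "f dvd (\<beta> * u - 1)"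
  using ord unfolding GR_unit_of_order_def by auto

lemma beta_order: "f dvd (\<beta>^(2^m-1) - 1)" "\<And>k. 0 < k \<Longrightarrow> k < 2^m - 1 \<Longrightarrow> \<not> f dvd (\<beta>^k - 1)"
  using ord unfolding GR_unit_of_order_def by auto

lemma cancel_beta: assumes "f dvd (\<beta>^i * Y)" shows "f dvd Y"
proof -
  obtain u where u: "f dvd (\<beta> * u - 1)" using unit_beta by blast
  have "f dvd ((\<beta>*u)^i - 1^i)" using dvd_trans_diff[OF u] .
  then have a: "f dvd (((\<beta>*u)^i - 1) * Y)" by simp
  have b: "f dvd (\<beta>^i * Y * u^i)" using assms by simp
  have "Y = \<beta>^i * Y * u^i - ((\<beta>*u)^i - 1) * Y" by (simp add: algebra_simps power_mult_distrib)
  then show ?thesis using a b by (metis dvd_diff)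
qed

lemma teich_frob: assumes "X \<in> Teich m f \<beta>" shows "f dvd (X^(2^m) - X)"
proof -
  have q: "(2::nat)^m = (2^m - 1) + 1" using m1 by simp
  consider "X = 0" | i where "f dvd (X - \<beta>^i)"
    using assms unfolding Teich_def by auto
  then show ?thesis
  proof cases
    case 1 then show ?thesis using m1 by (simp add: zero_power)
  next
    case 2
    have a: "f dvd (X^(2^m) - (\<beta>^i)^(2^m))" using dvd_trans_diff[OF 2] .
    have "f dvd ((\<beta>^(2^m-1))^i - 1^i)" using dvd_trans_diff[OF beta_order(1)] .
    then have b: "f dvd (\<beta>^i * ((\<beta>^(2^m-1))^i - 1))" by simp
    have "(\<beta>^i)^(2^m) = (\<beta>^i)^((2^m-1)+1)" using q by metis
    also have "\<dots> = \<beta>^i * (\<beta>^(2^m-1))^i"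
      by (simp only: power_add power_one_right) (simp add: power_mult[symmetric] mult.commute)
    finally have "(\<beta>^i)^(2^m) = \<beta>^i * (\<beta>^(2^m-1))^i" .
    then have "X^(2^m) - X = (X^(2^m) - (\<beta>^i)^(2^m)) + \<beta>^i * ((\<beta>^(2^m-1))^i - 1) - (X - \<beta>^i)"
      by (simp add: algebra_simps)
    then show ?thesis using a b 2 by (metis dvd_add dvd_diff)
  qed
qed

lemma g_ne0: "redpoly f \<noteq> 0"
  using fmod unfolding GR_modulus_def by auto

lemma redpoly_carrier: "X \<in> GR_carrier m \<Longrightarrow> redpoly X \<in> Fq_carrier m"
  unfolding GR_carrier_def Fq_carrier_def redpoly_def using map_poly_degree_leq le_less_trans by blast

lemma teich_carrier: "Teich m f \<beta> \<subseteq> GR_carrier m" unfolding Teich_def by auto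

lemma red_inj: "inj_on redpoly (Teich m f \<beta>)"
proof (rule inj_onI)
  fix X Y assume X: "X \<in> Teich m f \<beta>" and Y: "Y \<in> Teich m f \<beta>" and e: "redpoly X = redpoly Y"
  have "redpoly (X - Y) = 0" using e by (simp add: redpoly_diff bself)
  then have "f dvd (X^(2^m) - Y^(2^m))" using pow2_lift[of f X Y m] m1 by simp
  then have "f dvd ((X^(2^m) - Y^(2^m)) - (X^(2^m) - X) + (Y^(2^m) - Y))"
    using teich_frob[OF X] teich_frob[OF Y] by (metis dvd_add dvd_diff)
  then have "f dvd (X - Y)" by (simp add: algebra_simps)
  then show "X = Y" using carrier_eq X Y teich_carrier by auto
qed

definition rep :: "4 poly \<Rightarrow> 4 poly" where "rep p = snd (pseudo_divmod p f)"

lemma rep: "rep p \<in> GR_carrier m" "f dvd (rep p - p)"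
proof -
  obtain q r where qr: "pseudo_divmod p f = (q, r)" by fastforce
  have f0: "f \<noteq> 0" using df lf by auto
  note pd = pseudo_divmod[OF f0 qr]
  have "p = f * q + r" using pd(1) lf by simp
  then have "rep p - p = f * (- q)" unfolding rep_def qr by (simp add: algebra_simps)
  then show "f dvd (rep p - p)" by (metis dvd_triv_left)
  show "rep p \<in> GR_carrier m" using pd(2) m1 df unfolding rep_def qr GR_carrier_def by auto
qed

lemma card_teich: "card (Teich m f \<beta>) = 2 ^ m"
proof -
  let ?T1 = "{X \<in> GR_carrier m. \<exists>i < 2^m - 1. f dvd (X - \<beta>^i)}"
  have T: "Teich m f \<beta> = insert 0 ?T1" unfolding Teich_def using m1 by (auto simp: GR_carrier_def)
  have z: "0 \<notin> ?T1"
  proof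
    assume "0 \<in> ?T1"
    then obtain i where "f dvd (0 - \<beta>^i)" by auto
    then have "f dvd (\<beta>^i * 1)" by (simp add: dvd_minus_iff)
    then show False using cancel_beta not_dvd_1 by blast
  qed
  have img: "?T1 = (\<lambda>i. rep (\<beta>^i)) ` {..<2^m-1}"
  proof
    show "?T1 \<subseteq> (\<lambda>i. rep (\<beta>^i)) ` {..<2^m-1}"
    proof
      fix X assume "X \<in> ?T1"
      then obtain i where i: "i < 2^m-1" "f dvd (X - \<beta>^i)" "X \<in> GR_carrier m" by auto
      have "f dvd (X - \<beta>^i - (rep (\<beta>^i) - \<beta>^i))" using i(2) rep(2) by (metis dvd_diff)
      then have "X = rep (\<beta>^i)" using carrier_eq[OF i(3) rep(1)] by (simp add: algebra_simps)
      then show "X \<in> (\<lambda>i. rep (\<beta>^i)) ` {..<2^m-1}" using i by auto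
    qed
  next
    show "(\<lambda>i. rep (\<beta>^i)) ` {..<2^m-1} \<subseteq> ?T1"
      using rep by auto
  qed
  have inj: "inj_on (\<lambda>i. rep (\<beta>^i)) {..<2^m-1}"
  proof -
    have key: "False" if ij: "i < j" "j < 2^m - 1" "rep (\<beta>^i) = rep (\<beta>^j)" for i j
    proof -
      have "f dvd ((rep (\<beta>^i) - \<beta>^i) - (rep (\<beta>^j) - \<beta>^j))" using rep(2) by (metis dvd_diff)
      then have "f dvd (\<beta>^j - \<beta>^i)" using ij(3) by (simp add: algebra_simps)
      then have "f dvd (\<beta>^i * (\<beta>^(j-i) - 1))" using ij(1,3)
        by (simp add: algebra_simps power_add[symmetric])
      then have "f dvd (\<beta>^(j-i) - 1)" by (rule cancel_beta)
      then show False using beta_order(2)[of "j-i"] ij by auto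
    qed
    show ?thesis
      by (rule inj_onI) (metis key linorder_neqE_nat lessThan_iff)
  qed
  have "card ?T1 = 2^m - 1" using img card_image[OF inj] by simp
  moreover have "finite ?T1" using img by simp
  ultimately show ?thesis using T z m1 by simp
qed

lemma red_bij: "bij_betw redpoly (Teich m f \<beta>) (Fq_carrier m)"
proof -
  have "redpoly ` Teich m f \<beta> \<subseteq> Fq_carrier m" using redpoly_carrier teich_carrier by auto
  moreover have "card (redpoly ` Teich m f \<beta>) = card (Fq_carrier m)"
    using card_image[OF red_inj] card_teich card_F[OF m1] by simp
  moreover have "finite (Fq_carrier m)" using card_F[OF m1] by (metis card_ge_0_finite nat_zero_less_power_iff pos2)
  ultimately have "redpoly ` Teich m f \<beta> = Fq_carrier m" by (metis card_subset_eq)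
  then show ?thesis using red_inj unfolding bij_betw_def by simp
qed

lemma frob_F: "redpoly f dvd (p^(2^m) - p)"
proof -
  let ?g = "redpoly f"
  have dg: "degree ?g = m"
  proof -
    have "coeff ?g m = 1" using lf df unfolding redpoly_def by (simp add: coeff_map_poly)
    then have "m \<le> degree ?g" by (metis le_degree one_neq_zero)
    moreover have "degree ?g \<le> m" using df unfolding redpoly_def by (metis map_poly_degree_leq)
    ultimately show ?thesis by simp
  qed
  have "p mod ?g \<in> Fq_carrier m"
    using g_ne0 degree_mod_less'[of ?g p] dg m1 unfolding Fq_carrier_def by (cases "p mod ?g = 0") auto
  then obtain X where X: "X \<in> Teich m f \<beta>" "redpoly X = p mod ?g"
    using red_bij unfolding bij_betw_def by (metis imageE)
  have a: "?g dvd ((p mod ?g)^(2^m) - p mod ?g)"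
    using dvd_redpoly[OF teich_frob[OF X(1)]] X(2) by (simp add: redpoly_diff redpoly_power bdiff)
  have "?g dvd (p - p mod ?g)" by (simp add: minus_mod_eq_mult_div)
  then have b: "?g dvd (p^(2^m) - (p mod ?g)^(2^m))" by (metis dvd_trans dvd_power_diff)
  have "p^(2^m) - p = (p^(2^m) - (p mod ?g)^(2^m)) + ((p mod ?g)^(2^m) - p mod ?g) - (p - p mod ?g)"
    by (simp add: algebra_simps)
  then show ?thesis using a b \<open>?g dvd (p - p mod ?g)\<close> by (metis dvd_add dvd_diff)
qed

end



lemma char2I: "(E::bit poly) = C + 2 * R \<Longrightarrow> E = C" by (simp add: two0)

lemma odd_pow3: assumes "odd m" shows "\<exists>k. (2::nat)^m - 1 = 3*k + 1"
proof -
  obtain n where n: "m = 2*n+1" using assms oddE by blast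
  have "(4::nat)^n mod 3 = 1" by (induct n) (simp_all add: mod_mult_right_eq[symmetric])
  moreover have "(2::nat)^m = 2 * 4^n" unfolding n by (simp add: power_mult)
  ultimately have "(2::nat)^m mod 3 = 2" using mod_mult_right_eq[of "2::nat" "4^n" 3] by simp
  then show ?thesis by presburger
qed

lemma pdiff_dvd: "(a::'a::comm_ring_1) - b dvd a^n - b^n"
  by (metis power_diff_sumr2 dvd_triv_left)

locale ff =
  fixes g :: "bit poly" and m :: nat
  assumes pr: "prime_elem g" and dg: "degree g = m" and om: "odd m"
    and frob: "\<And>p. g dvd (p^(2^m) - p)"
begin

abbreviation "F \<equiv> Fq_carrier m"

lemma m1: "m \<ge> 1" using om by (cases m) auto
lemma g0: "g \<noteq> 0" using pr by auto
lemma ndvd1: "\<not> g dvd 1" using pr by (simp add: prime_elem_def)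
lemma finF: "finite F" using card_F[OF m1] by (metis card_ge_0_finite nat_zero_less_power_iff pos2)
lemma cardF: "card F = 2^m" using card_F[OF m1] .

lemma dmult: "g dvd a * b \<longleftrightarrow> g dvd a \<or> g dvd b" using pr by (simp add: prime_elem_dvd_mult_iff)
lemma dpow: "g dvd a ^ n \<Longrightarrow> g dvd a" using pr prime_elem_dvd_power by blast

lemma eqF: assumes "a \<in> F" "b \<in> F" "g dvd (a + b)" shows "a = b"
proof -
  have "degree (a + b) < m" using assms unfolding Fq_carrier_def by (auto intro: degree_add_less)
  then have "a + b = 0" using dvd_imp_degree_le[OF assms(3)] dg by (cases "a + b = 0") auto
  then show ?thesis by (simp add: add_eq_0_iff2 bminus)
qed

lemma addF: "a \<in> F \<Longrightarrow> b \<in> F \<Longrightarrow> a + b \<in> F" unfolding Fq_carrier_def by (auto intro: degree_add_less)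
lemma oneF: "1 \<in> F" using m1 unfolding Fq_carrier_def by auto
lemma zeroF: "0 \<in> F" using m1 unfolding Fq_carrier_def by auto
lemma modF: "p mod g \<in> F"
  using g0 degree_mod_less'[of g p] dg m1 unfolding Fq_carrier_def by (cases "p mod g = 0") auto
lemma dmod: "g dvd (p + p mod g)"
  by (metis bdiff minus_mod_eq_mult_div dvd_triv_left)

lemma dvd_cong_mod: "g dvd a \<longleftrightarrow> a mod g = 0" by (simp add: dvd_eq_mod_eq_0)

lemma comb1: assumes "E = c1 * A1 + 2 * R" "g dvd A1" shows "g dvd E"
proof - have "E = c1*A1" using assms(1) by (simp only: two0 mult_zero_left add_0_right)
  then show ?thesis using assms(2) by (metis dvd_mult) qed
lemma comb2: assumes "E = c1 * A1 + c2 * A2 + 2 * R" "g dvd A1" "g dvd A2" shows "g dvd E"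
proof - have "E = c1*A1 + c2*A2" using assms(1) by (simp only: two0 mult_zero_left add_0_right)
  then show ?thesis using assms(2,3) by (metis dvd_add dvd_mult) qed
lemma comb3: assumes "E = c1 * A1 + c2 * A2 + c3 * A3 + 2 * R" "g dvd A1" "g dvd A2" "g dvd A3" shows "g dvd E"
proof - have "E = c1*A1 + c2*A2 + c3*A3" using assms(1) by (simp only: two0 mult_zero_left add_0_right)
  then show ?thesis using assms(2-4) by (metis dvd_add dvd_mult) qed
lemma comb4: assumes "E = c1 * A1 + c2 * A2 + c3 * A3 + c4 * A4 + 2 * R" "g dvd A1" "g dvd A2" "g dvd A3" "g dvd A4" shows "g dvd E"
proof - have "E = c1*A1 + c2*A2 + c3*A3 + c4*A4" using assms(1) by (simp only: two0 mult_zero_left add_0_right)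
  then show ?thesis using assms(2-5) by (metis dvd_add dvd_mult) qed

lemma unit_pow: assumes "\<not> g dvd a" shows "g dvd (a * a^(2^m - 2) + 1)"
proof -
  have "(2::nat)^1 \<le> 2^m" by (rule power_increasing) (use m1 in auto)
  then have q: "(2::nat)^m = (2^m - 2) + 1 + 1" by simp
  have "a^(2^m) - a = a * (a * a^(2^m - 2) - 1)"
    by (subst q) (simp add: power_add algebra_simps)
  then have "g dvd a * (a * a^(2^m - 2) - 1)" using frob by metis
  then show ?thesis using assms by (simp add: dmult bdiff)
qed

definition iv where "iv a = a^(2^m - 2)"

lemma iv: "\<not> g dvd a \<Longrightarrow> g dvd (a * iv a + 1)" unfolding iv_def by (rule unit_pow)


lemma modcong2: "g dvd (y^2+y+a) \<Longrightarrow> g dvd ((y mod g)^2 + y mod g + a)"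
proof -
  assume h: "g dvd (y^2+y+a)"
  have "(y mod g)^2 + y mod g + a = 1*(y^2+y+a) + (y + y mod g + 1)*(y + y mod g) + 2*(-(y^2) - y - y*(y mod g))"
    by algebra
  from comb2[OF this h dmod] show ?thesis .
qed

definition sol where "sol a \<longleftrightarrow> (\<exists>y. g dvd (y^2 + y + a))"

lemma sol_F: "sol a \<Longrightarrow> \<exists>y\<in>F. g dvd (y^2 + y + a)"
  unfolding sol_def using modF modcong2 by blast

lemma sol_add: assumes "sol a" "sol b" shows "sol (a + b)"
proof -
  obtain y z where y: "g dvd (y^2+y+a)" and z: "g dvd (z^2+z+b)" using assms unfolding sol_def by auto
  have "(y+z)^2+(y+z)+(a+b) = 1*(y^2+y+a) + 1*(z^2+z+b) + 2*(y*z)" by algebra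
  from comb2[OF this y z] show ?thesis unfolding sol_def by blast
qed

lemma sol_triv: "sol (k^2 + k)"
proof -
  have "k^2+k+(k^2+k) = 0*0 + 2*(k^2+k)" by algebra
  from comb1[OF this] show ?thesis unfolding sol_def by blast
qed

lemma sol_cong: assumes "g dvd (a + c)" "sol a" shows "sol c"
proof -
  obtain y where y: "g dvd (y^2+y+a)" using assms unfolding sol_def by auto
  have "y^2+y+c = 1*(y^2+y+a) + 1*(a+c) + 2*(-a)" by algebra
  from comb2[OF this y assms(1)] show ?thesis unfolding sol_def by blast
qed

lemma unit_pow1: assumes "\<not> g dvd a" shows "g dvd (a^(2^m - 1) + 1)"
proof -
  have "(2::nat)^1 \<le> 2^m" by (rule power_increasing) (use m1 in auto)
  then have q: "(2::nat)^m - 1 = (2^m - 2) + 1" by simp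
  show ?thesis using unit_pow[OF assms] by (subst q) (simp add: mult.commute)
qed

lemma k3: obtains k where "(2::nat)^m - 1 = 3*k + 1" using odd_pow3[OF om] by blast

lemma not_sol1: "\<not> sol 1"
proof
  assume "sol 1"
  then obtain y where y: "g dvd (y^2+y+1)" unfolding sol_def by auto
  have ny: "\<not> g dvd y"
  proof
    assume "g dvd y"
    moreover have "1 = 1*(y^2+y+1) + (y+1)*y + 2*(-(y^2)-y)" by algebra
    ultimately show False using comb2[OF _ y] ndvd1 by metis
  qed
  obtain k where k: "(2::nat)^m - 1 = 3*k + 1" by (rule k3)
  have e: "y^(3*k+1) = y * (y^3)^k" by (simp add: power_add power_mult)
  have u: "g dvd (y * (y^3)^k + 1)" using unit_pow1[OF ny] unfolding k e .
  have "y^3 + 1 = (y+1)*(y^2+y+1) + 2*(-(y^2)-y)" by algebra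
  then have y3: "g dvd (y^3 + 1)" using comb1[of "y^3+1" "y+1" "y^2+y+1"] y by metis
  have "g dvd ((y^3)^k - 1^k)" using y3 pdiff_dvd[of "y^3" 1 k] dvd_trans by (metis bdiff)
  then have P: "g dvd ((y^3)^k + 1)" by (simp add: bdiff)
  have "y+1 = 1*(y * (y^3)^k + 1) + y*((y^3)^k+1) + 2*(-((y^3)^k*y))" by algebra
  from comb2[OF this u P] have y1: "g dvd (y + 1)" .
  have "1 = 1*(y^2+y+1) + y*(y+1) + 2*(-(y^2)-y)" by algebra
  from comb2[OF this y y1] show False using ndvd1 by simp
qed

text \<open>counting: the set of solvable elements has index 2\<close>

definition A0 where "A0 = {y\<in>F. coeff y 0 = 0}"
definition Hs where "Hs = {h\<in>F. sol h}"
definition phi where "phi y = (y^2 + y) mod g"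

lemma coeff_plus1: "coeff (y + 1) 0 = coeff y 0 + 1" for y :: "bit poly" by simp

lemma A0_card: "2 * card A0 = 2^m"
proof -
  let ?B = "{y\<in>F. coeff y 0 = 1}"
  have FAB: "F = A0 \<union> ?B" unfolding A0_def by auto
  have dis: "A0 \<inter> ?B = {}" unfolding A0_def by auto
  have img: "(\<lambda>y. y + 1) ` A0 = ?B"
  proof
    show "(\<lambda>y. y + 1) ` A0 \<subseteq> ?B" unfolding A0_def using addF oneF by auto
    show "?B \<subseteq> (\<lambda>y. y + 1) ` A0"
    proof
      fix y assume y: "y \<in> ?B"
      have "y = (y + 1) + 1" by (simp add: add.assoc bself)
      moreover have "y + 1 \<in> A0" using y addF oneF unfolding A0_def by auto
      ultimately show "y \<in> (\<lambda>y. y + 1) ` A0" by blast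
    qed
  qed
  have inj: "inj_on (\<lambda>y. y + 1) A0" by (rule inj_onI) simp
  have "card ?B = card A0" using card_image[OF inj] img by simp
  moreover have "finite A0" "finite ?B" using finF unfolding A0_def by auto
  ultimately show ?thesis using cardF FAB dis card_Un_disjoint by (metis mult_2)
qed

lemma Hs_img: "Hs = phi ` A0"
proof
  show "phi ` A0 \<subseteq> Hs"
  proof
    fix h assume "h \<in> phi ` A0"
    then obtain y where h: "h = (y^2+y) mod g" unfolding phi_def by auto
    have "g dvd (y^2 + y + h)" unfolding h by (rule dmod)
    then show "h \<in> Hs" unfolding Hs_def sol_def using modF h by auto
  qed
  show "Hs \<subseteq> phi ` A0"
  proof
    fix h assume "h \<in> Hs"
    then obtain y where y: "y \<in> F" "g dvd (y^2+y+h)" and hF: "h \<in> F"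
      unfolding Hs_def using sol_F by blast
    have key: "h = phi z" if "z \<in> F" "g dvd (z^2+z+h)" for z
    proof -
      have "(z^2+z) mod g + h = 1*((z^2+z) + (z^2+z) mod g) + 1*(z^2+z+h) + 2*(-(z^2+z))"
        by algebra
      from comb2[OF this dmod that(2)] have "g dvd ((z^2+z) mod g + h)" .
      then show ?thesis unfolding phi_def using eqF modF hF by metis
    qed
    show "h \<in> phi ` A0"
    proof (cases "coeff y 0 = 0")
      case True then show ?thesis using key[OF y] y(1) unfolding A0_def by auto
    next
      case False
      then have c: "coeff (y+1) 0 = 0" by simp
      have "(y+1)^2+(y+1)+h = 1*(y^2+y+h) + 2*(y+1)" by algebra
      from comb1[OF this y(2)] have "g dvd ((y+1)^2+(y+1)+h)" .
      moreover have yF: "y + 1 \<in> F" using y(1) addF oneF by auto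
      ultimately have "h = phi (y+1)" using key by blast
      moreover have "y + 1 \<in> A0" using yF c unfolding A0_def by auto
      ultimately show ?thesis by blast
    qed
  qed
qed

lemma phi_inj: "inj_on phi A0"
proof (rule inj_onI)
  fix y z assume y: "y \<in> A0" and z: "z \<in> A0" and e: "phi y = phi z"
  have "g dvd ((y^2+y) - (z^2+z))" using e unfolding phi_def by (simp add: mod_eq_dvd_iff)
  then have "g dvd ((y^2+y) + (z^2+z))" by (simp add: bdiff)
  moreover have "(y^2+y) + (z^2+z) = (y+z)*(y+z+1) + 2*(-y*z)" by algebra
  ultimately have "g dvd ((y+z)*(y+z+1))" by (simp add: two0)
  then consider "g dvd (y + z)" | "g dvd (y + (z + 1))" by (auto simp: dmult add.assoc)
  then show "y = z"
  proof cases
    case 1 then show ?thesis using eqF y z unfolding A0_def by auto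
  next
    case 2
    then have "y = z + 1" using eqF y z addF oneF unfolding A0_def by auto
    then show ?thesis using y z unfolding A0_def by auto
  qed
qed

lemma Hs_card: "2 * card Hs = 2^m"
  using A0_card Hs_img card_image[OF phi_inj] by simp

lemma index2F: assumes "a \<in> F" "b \<in> F" "\<not> sol a" "\<not> sol b" shows "sol (a + b)"
proof -
  have finH: "finite Hs" using finF unfolding Hs_def by auto
  have HF: "Hs \<subseteq> F" unfolding Hs_def by auto
  have sub: "(\<lambda>h. a + h) ` Hs \<subseteq> F - Hs"
  proof
    fix x assume "x \<in> (\<lambda>h. a + h) ` Hs"
    then obtain h where h: "h \<in> Hs" "x = a + h" by auto
    have "\<not> sol x"
    proof
      assume "sol x"
      have "sol h" using h(1) unfolding Hs_def by simp
      have "sol (x + h)" by (rule sol_add[OF \<open>sol x\<close> \<open>sol h\<close>])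
      moreover have "x + h = a" using h(2) by (simp add: add.assoc bself)
      ultimately show False using assms by simp
    qed
    then show "x \<in> F - Hs" using h addF assms HF unfolding Hs_def by auto
  qed
  have inj: "inj_on (\<lambda>h. a + h) Hs" by (rule inj_onI) simp
  have "card (F - Hs) = card Hs" using card_Diff_subset[OF finH HF] cardF Hs_card by simp
  then have "(\<lambda>h. a + h) ` Hs = F - Hs"
    using card_image[OF inj] sub finF by (metis card_subset_eq finite_Diff)
  moreover have "b \<in> F - Hs" using assms unfolding Hs_def by auto
  ultimately obtain h where h: "h \<in> Hs" "b = a + h" by auto
  have "a + b = h" unfolding h(2) by (simp add: add.assoc[symmetric] bself)
  then show ?thesis using h unfolding Hs_def by auto
qed

lemma sol_mod: "sol a \<longleftrightarrow> sol (a mod g)"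
  using sol_cong dmod by (metis add.commute)

lemma index2: assumes "\<not> sol a" "\<not> sol b" shows "sol (a + b)"
proof -
  have "sol (a mod g + b mod g)" using index2F[OF modF modF] assms sol_mod by blast
  moreover have "g dvd ((a mod g + b mod g) + (a + b))"
  proof -
    have "(a mod g + b mod g) + (a + b) = 1*(a + a mod g) + 1*(b + b mod g) + 2*0" by algebra
    from comb2[OF this dmod dmod] show ?thesis .
  qed
  ultimately show ?thesis using sol_cong by blast
qed

end



context ff begin

definition Qs where "Qs d = {v\<in>F. g dvd (v^2 + d*v + 1)}"
definition Cs where "Cs d = {x\<in>F. g dvd (x^3 + x + d)}"

lemma nzF: "d \<in> F \<Longrightarrow> d \<noteq> 0 \<Longrightarrow> \<not> g dvd d"
  using eqF[of d 0] zeroF by auto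

lemma modQ: assumes "g dvd (v^2+d*v+1)" shows "g dvd ((v mod g)^2 + d*(v mod g) + 1)"
proof -
  have "(v mod g)^2 + d*(v mod g) + 1 = 1*(v^2+d*v+1) + (v + v mod g + d)*(v + v mod g) + 2*(-(v^2) - d*v - (v mod g)*v)"
    by algebra
  from comb2[OF this assms dmod] show ?thesis .
qed

lemma modC: assumes "g dvd (x^3+x+d)" shows "g dvd ((x mod g)^3 + (x mod g) + d)"
proof -
  have "(x mod g)^3 + (x mod g) + d = 1*(x^3+x+d) + (x^2 + x*(x mod g) + (x mod g)^2 + 1)*(x + x mod g) + 2*(-(x^3) - x - (x mod g)*x^2 - (x mod g)^2*x)"
    by algebra
  from comb2[OF this assms dmod] show ?thesis .
qed

lemma modK: assumes "g dvd (x^2+r*x+r^2+1)" shows "g dvd ((x mod g)^2 + r*(x mod g) + r^2 + 1)"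
proof -
  have "(x mod g)^2 + r*(x mod g) + r^2 + 1 = 1*(x^2+r*x+r^2+1) + (x + x mod g + r)*(x + x mod g) + 2*(-(x^2) - r*x - (x mod g)*x)"
    by algebra
  from comb2[OF this assms dmod] show ?thesis .
qed

lemma eq1: "x \<in> F \<Longrightarrow> g dvd (x + 1) \<Longrightarrow> x = 1" using eqF oneF by blast

lemma Qs0: "Qs 0 = {1}"
proof
  show "Qs 0 \<subseteq> {1}"
  proof
    fix v assume v: "v \<in> Qs 0"
    have "v^2 + 0*v + 1 = (v+1)*(v+1) + 2*(-v)" by algebra
    then have "g dvd ((v+1)*(v+1))" using v unfolding Qs_def by (simp add: two0)
    then show "v \<in> {1}" using v eq1 unfolding Qs_def by (auto simp: dmult)
  qed
  have "(1::bit poly)^2 + 0*1 + 1 = 0*0 + 2*1" by simp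
  then have "g dvd ((1::bit poly)^2 + 0*1 + 1)" by (simp add: two0)
  then show "{1} \<subseteq> Qs 0" using oneF unfolding Qs_def by auto
qed

lemma Qs_card: assumes d: "d \<in> F" "d \<noteq> 0" and ne: "Qs d \<noteq> {}" shows "card (Qs d) = 2"
proof -
  obtain v where vF: "v \<in> F" and hv: "g dvd (v^2+d*v+1)" using ne unfolding Qs_def by auto
  have nv: "\<not> g dvd v"
  proof
    assume "g dvd v"
    moreover have "1 = 1*(v^2+d*v+1) + (v+d)*v + 2*(-(v^2) - d*v)" by algebra
    ultimately show False using comb2[OF _ hv] ndvd1 by metis
  qed
  define w where "w = iv v mod g"
  have wF: "w \<in> F" unfolding w_def by (rule modF)
  have "v*w+1 = 1*(v * iv v + 1) + v*(iv v + iv v mod g) + 2*(-(iv v * v))" unfolding w_def by algebra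
  from comb2[OF this iv[OF nv] dmod] have hw: "g dvd (v*w+1)" .
  have "w^2+d*w+1 = w^2*(v^2+d*v+1) + (v*w+1+d*w)*(v*w+1) + 2*(-(v^2*w^2) - d*v*w^2 - v*w)" by algebra
  from comb2[OF this hv hw] have hw2: "g dvd (w^2+d*w+1)" .
  have "d+v+w = w*(v^2+d*v+1) + (v+d)*(v*w+1) + 2*(-(v^2*w) - d*v*w)" by algebra
  from comb2[OF this hv hw] have s: "g dvd (d+v+w)" .
  have vw: "v \<noteq> w"
  proof
    assume e: "v = w"
    have "v*v+1 = (v+1)*(v+1) + 2*(-v)" by algebra
    then have "g dvd ((v+1)*(v+1))" using hw e by (simp add: two0)
    then have "v = 1" using eq1 vF by (auto simp: dmult)
    then have "d = 1*(d+v+w) + 2*(-1)" using e by simp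
    then have "g dvd d" using comb1 s by metis
    then show False using nzF d by blast
  qed
  have "Qs d = {v, w}"
  proof
    show "{v, w} \<subseteq> Qs d" using vF wF hv hw2 unfolding Qs_def by auto
    show "Qs d \<subseteq> {v, w}"
    proof
      fix x assume x: "x \<in> Qs d"
      then have hx: "g dvd (x^2+d*x+1)" and xF: "x \<in> F" unfolding Qs_def by auto
      have "(x+v)*(x+w) = 1*(x^2+d*x+1) + x*(d+v+w) + 1*(v*w+1) + 2*(-(d*x) - 1)" by algebra
      from comb3[OF this hx s hw] have "g dvd ((x+v)*(x+w))" .
      then show "x \<in> {v, w}" using eqF xF vF wF by (auto simp: dmult)
    qed
  qed
  then show ?thesis using vw by simp
qed

lemma Qs_sol: assumes d: "d \<in> F" "d \<noteq> 0" shows "Qs d \<noteq> {} \<longleftrightarrow> sol ((iv d)^2)"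
proof -
  define i where "i = iv d"
  have hi: "g dvd (d*i+1)" unfolding i_def using iv nzF d by blast
  show ?thesis unfolding i_def[symmetric]
  proof
    assume "Qs d \<noteq> {}"
    then obtain v where hv: "g dvd (v^2+d*v+1)" unfolding Qs_def by auto
    have "(i*v)^2+i*v+i^2 = i^2*(v^2+d*v+1) + (i*v)*(d*i+1) + 2*(-(d*i^2*v))" by algebra
    from comb2[OF this hv hi] show "sol (i^2)" unfolding sol_def by blast
  next
    assume "sol (i^2)"
    then obtain y where hy: "g dvd (y^2+y+i^2)" unfolding sol_def by auto
    have "(d*y)^2+d*(d*y)+1 = d^2*(y^2+y+i^2) + (d*i+1)*(d*i+1) + 2*(-(d^2*i^2) - d*i)" by algebra
    from comb2[OF this hy hi] have "g dvd ((d*y)^2+d*(d*y)+1)" .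
    from modQ[OF this] show "Qs d \<noteq> {}" using modF unfolding Qs_def by blast
  qed
qed


lemma cubic_main: assumes d: "d \<in> F" "d \<noteq> 0" and ne: "Cs d \<noteq> {}"
  shows "card (Cs d) = 1 \<longleftrightarrow> Qs d \<noteq> {}"
proof -
  have nd: "\<not> g dvd d" using nzF d by blast
  obtain r where rF: "r \<in> F" and hr: "g dvd (r^3+r+d)" using ne unfolding Cs_def by auto
  have nr: "\<not> g dvd r"
  proof
    assume "g dvd r"
    moreover have "d = 1*(r^3+r+d) + (r^2+1)*r + 2*(-(r^3) - r)" by algebra
    ultimately show False using comb2[OF _ hr] nd by metis
  qed
  have r1: "\<not> g dvd (r + 1)"
  proof
    assume "g dvd (r + 1)"
    then have "r = 1" using eq1 rF by blast
    then have "d = 1*(r^3+r+d) + 2*(-1)" by simp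
    then show False using comb1 hr nd by metis
  qed
  define K where "K = {x\<in>F. g dvd (x^2+r*x+r^2+1)}"
  have CK: "Cs d = insert r K"
  proof
    show "Cs d \<subseteq> insert r K"
    proof
      fix x assume "x \<in> Cs d"
      then have xF: "x \<in> F" and hx: "g dvd (x^3+x+d)" unfolding Cs_def by auto
      have "(x+r)*(x^2+r*x+r^2+1) = 1*(x^3+x+d) + 1*(r^3+r+d) + 2*(r*x^2 + r^2*x - d)" by algebra
      from comb2[OF this hx hr] have "g dvd ((x+r)*(x^2+r*x+r^2+1))" .
      then show "x \<in> insert r K" using eqF xF rF unfolding K_def by (auto simp: dmult)
    qed
    show "insert r K \<subseteq> Cs d"
    proof
      fix x assume "x \<in> insert r K"
      then consider "x = r" | "x \<in> K" by auto
      then show "x \<in> Cs d"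
      proof cases
        case 1 then show ?thesis using rF hr unfolding Cs_def by auto
      next
        case 2
        then have xF: "x \<in> F" and hx: "g dvd (x^2+r*x+r^2+1)" unfolding K_def by auto
        have "x^3+x+d = (x+r)*(x^2+r*x+r^2+1) + 1*(r^3+r+d) + 2*(-(r*x^2) - r^2*x - r^3 - r)" by algebra
        from comb2[OF this hx hr] show ?thesis using xF unfolding Cs_def by auto
      qed
    qed
  qed
  have rK: "r \<notin> K"
  proof
    assume "r \<in> K"
    then have h: "g dvd (r^2+r*r+r^2+1)" unfolding K_def by auto
    have "r^2+r*r+r^2+1 = (r+1)*(r+1) + 2*(r^2 - r)" by algebra
    then have "g dvd ((r+1)*(r+1))" using h by (simp add: two0)
    then show False using r1 by (simp add: dmult)
  qed
  have finK: "finite K" using finF unfolding K_def by auto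
  have c1: "card (Cs d) = 1 \<longleftrightarrow> K = {}" using CK rK finK by simp
  define j where "j = iv r"
  define k where "k = iv (r+1)"
  define i where "i = iv d"
  have hj: "g dvd (r*j+1)" unfolding j_def using iv nr by blast
  have hk: "g dvd ((r+1)*k+1)" unfolding k_def using iv r1 by blast
  have hi: "g dvd (d*i+1)" unfolding i_def using iv nd by blast
  have Ksol: "K \<noteq> {} \<longleftrightarrow> sol (1 + j^2)"
  proof
    assume "K \<noteq> {}"
    then obtain x where hx: "g dvd (x^2+r*x+r^2+1)" unfolding K_def by auto
    have "(j*x)^2+j*x+(1+j^2) = j^2*(x^2+r*x+r^2+1) + (j*x + j*r + 1)*(r*j+1) + 2*(-(j^2*r*x) - j^2*r^2 - j*r)" by algebra
    from comb2[OF this hx hj] show "sol (1 + j^2)" unfolding sol_def by blast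
  next
    assume "sol (1 + j^2)"
    then obtain y where hy: "g dvd (y^2+y+(1+j^2))" unfolding sol_def by auto
    have "(r*y)^2+r*(r*y)+r^2+1 = r^2*(y^2+y+(1+j^2)) + (r*j+1)*(r*j+1) + 2*(-(j^2*r^2) - j*r)" by algebra
    from comb2[OF this hy hj] have "g dvd ((r*y)^2+r*(r*y)+r^2+1)" .
    from modK[OF this] show "K \<noteq> {}" using modF unfolding K_def by blast
  qed
  have Qsol: "Qs d \<noteq> {} \<longleftrightarrow> sol (i^2)" unfolding i_def using Qs_sol d by blast
  have "d*(j+k+k^2)+1 = (j+k+k^2)*(r^3+r+d) + (r+1)^2*(r*j+1) + (r*(r+1))*((r+1)*k+1) + (r*((r+1)*k+1))*((r+1)*k+1)
     + 2*(-(j*r^3) - k*r^3 - k^2*r^3 - j*r - 2*k*r - k^2*r - r^2 - j*r^2 - 2*r - 2*k*r^2 - k^2*r^2)" by algebra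
  from comb4[OF this hr hj hk hk] have S: "g dvd (d*(j+k+k^2)+1)" .
  have "i+j+k+k^2 = i*(d*(j+k+k^2)+1) + (j+k+k^2)*(d*i+1) + 2*(-(d*i*j) - d*i*k - d*i*k^2)" by algebra
  from comb2[OF this S hi] have P: "g dvd (i+j+k+k^2)" .
  have "(k^2)^2+k^2+(i^2+j^2) = (i+j+k+k^2)*(i+j+k+k^2) + 2*(-(i*j) - i*k - i*k^2 - j*k - j*k^2 - k^3)" by algebra
  from comb1[OF this P] have "g dvd ((k^2)^2+k^2+(i^2+j^2))" .
  then have sij: "sol (i^2+j^2)" using sol_cong sol_triv by blast
  have "(i^2+(i^2+j^2))+j^2 = 0*0 + 2*(i^2+j^2)" by algebra
  then have c_ij: "g dvd ((i^2+(i^2+j^2))+j^2)" using comb1 by blast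
  have "(j^2+(i^2+j^2))+i^2 = 0*0 + 2*(i^2+j^2)" by algebra
  then have c_ji: "g dvd ((j^2+(i^2+j^2))+i^2)" using comb1 by blast
  have "(j^2+(1+j^2))+1 = 0*0 + 2*(j^2+1)" by algebra
  then have c_1: "g dvd ((j^2+(1+j^2))+1)" using comb1 by blast
  show ?thesis
  proof
    assume "card (Cs d) = 1"
    then have "K = {}" using c1 by simp
    then have ns: "\<not> sol (1 + j^2)" using Ksol by simp
    show "Qs d \<noteq> {}"
    proof (rule ccontr)
      assume "\<not> Qs d \<noteq> {}"
      then have "\<not> sol (i^2)" using Qsol by simp
      then have "\<not> sol (j^2)" using sol_add[OF _ sij] sol_cong[OF c_ji] by blast
      then have "sol (1 + j^2)" using index2 not_sol1 by blast
      then show False using ns by simp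
    qed
  next
    assume "Qs d \<noteq> {}"
    then have "sol (i^2)" using Qsol by simp
    then have sj: "sol (j^2)" using sol_add[OF _ sij] sol_cong[OF c_ij] by blast
    have "\<not> sol (1 + j^2)"
    proof
      assume "sol (1 + j^2)"
      then have "sol 1" using sol_add[OF sj] sol_cong[OF c_1] by blast
      then show False using not_sol1 by simp
    qed
    then show "card (Cs d) = 1" using Ksol c1 by simp
  qed
qed


lemma inv3: assumes "\<not> g dvd t" obtains k where "g dvd (t * (t^3)^k + 1)" "(2::nat)^m - 1 = 3*k+1"
proof -
  obtain k where k: "(2::nat)^m - 1 = 3*k + 1" by (rule k3)
  have e: "t^(3*k+1) = t * (t^3)^k" by (simp add: power_add power_mult)
  have "g dvd (t * (t^3)^k + 1)" using unit_pow1[OF assms] unfolding k e .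
  then show ?thesis using that k by blast
qed

lemma cube_surj: assumes vF: "v \<in> F" and nv: "\<not> g dvd v" shows "\<exists>t. \<not> g dvd t \<and> g dvd (t^3 + v)"
proof -
  let ?F' = "F - {0}"
  let ?c = "\<lambda>t. t^3 mod g"
  obtain k where k: "(2::nat)^m - 1 = 3*k + 1" by (rule k3)
  have nz: "\<not> g dvd t" if "t \<in> ?F'" for t using nzF that by auto
  have sub: "?c ` ?F' \<subseteq> ?F'"
  proof
    fix x assume "x \<in> ?c ` ?F'"
    then obtain t where t: "t \<in> ?F'" "x = t^3 mod g" by auto
    have "x \<noteq> 0"
    proof
      assume "x = 0"
      then have "g dvd t^3" using t by (simp add: dvd_eq_mod_eq_0)
      then show False using dpow nz t(1) by blast
    qed
    then show "x \<in> ?F'" using t modF by auto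
  qed
  have inj: "inj_on ?c ?F'"
  proof (rule inj_onI)
    fix t s assume t: "t \<in> ?F'" and s: "s \<in> ?F'" and e: "?c t = ?c s"
    have "g dvd (t^3 - s^3)" using e by (simp add: mod_eq_dvd_iff)
    then have "g dvd ((t^3)^k - (s^3)^k)" using pdiff_dvd dvd_trans by blast
    then have QP: "g dvd ((t^3)^k + (s^3)^k)" by (simp add: bdiff)
    obtain kt where ht: "g dvd (t * (t^3)^kt + 1)" and kt: "(2::nat)^m - 1 = 3*kt+1" using inv3 nz[OF t] by blast
    obtain ks where hs: "g dvd (s * (s^3)^ks + 1)" and ks: "(2::nat)^m - 1 = 3*ks+1" using inv3 nz[OF s] by blast
    have "kt = k" "ks = k" using k kt ks by auto
    then have ht: "g dvd (t * (t^3)^k + 1)" and hs: "g dvd (s * (s^3)^k + 1)" using ht hs by auto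
    have "t+s = t*(s * (s^3)^k + 1) + s*(t * (t^3)^k + 1) + (t*s)*((t^3)^k + (s^3)^k) + 2*(-((s^3)^k*s*t) - (t^3)^k*s*t)"
      by algebra
    from comb3[OF this hs ht QP] have "g dvd (t + s)" .
    then show "t = s" using eqF t s by auto
  qed
  have "?c ` ?F' = ?F'" using endo_inj_surj[OF _ sub inj] finF by auto
  moreover have "v mod g \<in> ?F'" using modF nv by (auto simp: dvd_eq_mod_eq_0)
  ultimately obtain t where t: "t \<in> ?F'" "t^3 mod g = v mod g" by (metis (no_types, lifting) imageE)
  have "g dvd (t^3 - v)" using t(2) by (simp add: mod_eq_dvd_iff)
  then show ?thesis using nz[OF t(1)] by (auto simp: bdiff)
qed

lemma cube_exists: assumes d: "d \<in> F" "d \<noteq> 0" and ne: "Qs d \<noteq> {}" shows "Cs d \<noteq> {}"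
proof -
  obtain v where vF: "v \<in> F" and hv: "g dvd (v^2+d*v+1)" using ne unfolding Qs_def by auto
  have nv: "\<not> g dvd v"
  proof
    assume "g dvd v"
    moreover have "1 = 1*(v^2+d*v+1) + (v+d)*v + 2*(-(v^2) - d*v)" by algebra
    ultimately show False using comb2[OF _ hv] ndvd1 by metis
  qed
  obtain t where nt: "\<not> g dvd t" and ht: "g dvd (t^3 + v)" using cube_surj[OF vF nv] by blast
  define u where "u = iv t"
  have hu: "g dvd (t*u+1)" unfolding u_def using iv nt by blast
  have "(t*u)^3+1 = ((t*u)^2-t*u+1)*(t*u+1) + 2*0" by algebra
  from comb1[OF this hu] have hu3: "g dvd ((t*u)^3+1)" .
  have "v*u^3+1 = u^3*(t^3+v) + 1*((t*u)^3+1) + 2*(-(t^3*u^3))" by algebra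
  from comb2[OF this ht hu3] have hw: "g dvd (v*u^3+1)" .
  have "d+v+u^3 = u^3*(v^2+d*v+1) + (v+d)*(v*u^3+1) + 2*(-(v^2*u^3) - d*v*u^3)" by algebra
  from comb2[OF this hv hw] have s: "g dvd (d+v+u^3)" .
  have "(t+u)^3+(t+u)+d = 1*(t^3+v) + 1*(d+v+u^3) + (t+u)*(t*u+1) + 2*(t^2*u + t*u^2 - v)" by algebra
  from comb3[OF this ht s hu] have "g dvd ((t+u)^3+(t+u)+d)" .
  from modC[OF this] show ?thesis using modF unfolding Cs_def by blast
qed

lemma F_main: assumes dF: "d \<in> F"
  shows "(d = 0 \<longrightarrow> card (Qs d) = 1) \<and> (d \<noteq> 0 \<and> card (Cs d) = 1 \<longrightarrow> card (Qs d) = 2) \<and>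
         (d \<noteq> 0 \<and> (card (Cs d) = 0 \<or> card (Cs d) = 3) \<longrightarrow> card (Qs d) = 0)"
proof -
  have finC: "finite (Cs d)" using finF unfolding Cs_def by auto
  have finQ: "finite (Qs d)" using finF unfolding Qs_def by auto
  have a: "card (Qs d) = 2" if "d \<noteq> 0" "card (Cs d) = 1"
  proof -
    have "Cs d \<noteq> {}" using that by auto
    then have "Qs d \<noteq> {}" using cubic_main[OF dF that(1)] that by simp
    then show ?thesis using Qs_card dF that by blast
  qed
  have b: "card (Qs d) = 0" if "d \<noteq> 0" "card (Cs d) = 0 \<or> card (Cs d) = 3"
  proof -
    have "Qs d = {}"
    proof (cases "card (Cs d) = 0")
      case True
      then have "Cs d = {}" using finC by simp
      then show ?thesis using cube_exists dF that(1) by blast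
    next
      case False
      then have "card (Cs d) = 3" using that by simp
      then have "Cs d \<noteq> {}" "card (Cs d) \<noteq> 1" by auto
      then show ?thesis using cubic_main[OF dF that(1)] by blast
    qed
    then show ?thesis by simp
  qed
  show ?thesis using a b Qs0 by auto
qed


lemma modG: assumes "g dvd (u^2+e*u+c)" shows "g dvd ((u mod g)^2 + e*(u mod g) + c)"
proof -
  have "(u mod g)^2 + e*(u mod g) + c = 1*(u^2+e*u+c) + (u + u mod g + e)*(u + u mod g) + 2*(-(u^2) - e*u - (u mod g)*u)"
    by algebra
  from comb2[OF this assms dmod] show ?thesis .
qed

lemma mult_inj: assumes "\<not> g dvd b" shows "inj_on (\<lambda>v. (b*v) mod g) F"
proof (rule inj_onI)
  fix v v' assume v: "v \<in> F" "v' \<in> F" and e: "(b*v) mod g = (b*v') mod g"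
  have "g dvd (b*v - b*v')" using e by (simp add: mod_eq_dvd_iff)
  then have "g dvd (b*(v + v'))" by (simp add: bdiff algebra_simps)
  then have "g dvd (v + v')" using assms by (simp add: dmult)
  then show "v = v'" using eqF v by blast
qed

lemma count_V: assumes bF: "b \<in> F" "b \<noteq> 0" and dF: "d \<in> F"
  shows "card {u\<in>F. g dvd (u^2 + ((b*d) mod g)*u + b^2)} = card (Qs d)"
proof -
  define e where "e = (b*d) mod g"
  let ?V = "{u\<in>F. g dvd (u^2 + e*u + b^2)}"
  have nb: "\<not> g dvd b" using nzF bF by blast
  have he: "g dvd (e + b*d)" unfolding e_def using dmod by (metis add.commute)
  define i where "i = iv b"
  have hi: "g dvd (b*i+1)" unfolding i_def using iv nb by blast
  have ni: "\<not> g dvd i"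
  proof
    assume "g dvd i"
    moreover have "1 = 1*(b*i+1) + (-b)*i + 2*0" by algebra
    ultimately show False using comb2[OF _ hi] ndvd1 by metis
  qed
  have finV: "finite ?V" and finQ: "finite (Qs d)" using finF unfolding Qs_def by auto
  have "card (Qs d) \<le> card ?V"
  proof (rule card_inj_on_le[OF inj_on_subset[OF mult_inj[OF nb]] _ finV])
    show "Qs d \<subseteq> F" unfolding Qs_def by auto
    show "(\<lambda>v. (b*v) mod g) ` Qs d \<subseteq> ?V"
    proof
      fix u assume "u \<in> (\<lambda>v. (b*v) mod g) ` Qs d"
      then obtain v where v: "g dvd (v^2+d*v+1)" "u = (b*v) mod g" unfolding Qs_def by auto
      have "(b*v)^2+e*(b*v)+b^2 = b^2*(v^2+d*v+1) + (b*v)*(e+b*d) + 2*(-(b^2*d*v))" by algebra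
      from comb2[OF this v(1) he] have "g dvd ((b*v)^2+e*(b*v)+b^2)" .
      from modG[OF this] show "u \<in> ?V" using v(2) modF by auto
    qed
  qed
  moreover have "card ?V \<le> card (Qs d)"
  proof (rule card_inj_on_le[OF inj_on_subset[OF mult_inj[OF ni]] _ finQ])
    show "?V \<subseteq> F" by auto
    show "(\<lambda>v. (i*v) mod g) ` ?V \<subseteq> Qs d"
    proof
      fix v assume "v \<in> (\<lambda>v. (i*v) mod g) ` ?V"
      then obtain u where u: "g dvd (u^2+e*u+b^2)" "v = (i*u) mod g" by auto
      have "(i*u)^2+d*(i*u)+1 = i^2*(u^2+e*u+b^2) + (d*i*u+b*i+1)*(b*i+1) + (i^2*u)*(e+b*d)
          + 2*(-(e*i^2*u) - b^2*i^2 - b*d*i^2*u - b*i)" by algebra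
      from comb3[OF this u(1) hi he] have "g dvd ((i*u)^2+d*(i*u)+1)" .
      from modQ[OF this] show "v \<in> Qs d" using u(2) modF unfolding Qs_def by auto
    qed
  qed
  ultimately show ?thesis unfolding e_def by simp
qed

lemma count_main: assumes bF: "b \<in> F" "b \<noteq> 0" and dF: "d \<in> F"
  shows "card {(x,y,z,w). x\<in>F \<and> y\<in>F \<and> z\<in>F \<and> w\<in>F \<and> g dvd (x+y+z+w) \<and> g dvd (x*y+z*w+b^2)
              \<and> g dvd (x^3+y^3+z^3+w^3+b^3*d)} = 2^m * card (Qs d)"
proof -
  define e where "e = (b*d) mod g"
  have eF: "e \<in> F" unfolding e_def by (rule modF)
  have he: "g dvd (b*d + e)" unfolding e_def by (rule dmod)
  have nb: "\<not> g dvd b" using nzF bF by blast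
  let ?S = "{(x,y,z,w). x\<in>F \<and> y\<in>F \<and> z\<in>F \<and> w\<in>F \<and> g dvd (x+y+z+w) \<and> g dvd (x*y+z*w+b^2)
              \<and> g dvd (x^3+y^3+z^3+w^3+b^3*d)}"
  let ?U = "{(x,z). x\<in>F \<and> z\<in>F \<and> g dvd (x*(x+e)+z*(z+e)+b^2)}"
  let ?V = "{u\<in>F. g dvd (u^2 + e*u + b^2)}"
  have cub: "x^3+y^3+z^3+w^3+b^3*d = b^2*(x+y+b*d) + (x+y)*(x*y+z*w+b^2) + ((x+y)^2+(x+y)*(z+w)+(z+w)^2+z*w)*(x+y+z+w)
     + 2*(-(b^2*x) - b^2*y - 2*x^2*y - 3*w*x*z - 2*x*y^2 - 3*w*y*z - x^2*z - w*x^2 - 2*x*y*z - 2*w*x*y - y^2*z - w*y^2 - x*z^2 - w^2*x - y*z^2 - w^2*y - 2*w*z^2 - 2*w^2*z)"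
    for x y z w :: "bit poly" by algebra
  have S_eq: "?S = (\<lambda>(x,z). (x, x+e, z, z+e)) ` ?U"
  proof
    show "?S \<subseteq> (\<lambda>(x,z). (x, x+e, z, z+e)) ` ?U"
    proof
      fix t assume "t \<in> ?S"
      then obtain x y z w where t: "t = (x,y,z,w)" and F4: "x\<in>F" "y\<in>F" "z\<in>F" "w\<in>F"
        and h1: "g dvd (x+y+z+w)" and h2: "g dvd (x*y+z*w+b^2)" and h3: "g dvd (x^3+y^3+z^3+w^3+b^3*d)" by auto
      have "b^2*(x+y+b*d) = 1*(x^3+y^3+z^3+w^3+b^3*d) + (x+y)*(x*y+z*w+b^2) + ((x+y)^2+(x+y)*(z+w)+(z+w)^2+z*w)*(x+y+z+w)
        + 2*(-((x+y)*(x*y+z*w+b^2)) - ((x+y)^2+(x+y)*(z+w)+(z+w)^2+z*w)*(x+y+z+w)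
           + (b^2*x + b^2*y + 2*x^2*y + 3*w*x*z + 2*x*y^2 + 3*w*y*z + x^2*z + w*x^2 + 2*x*y*z + 2*w*x*y + y^2*z + w*y^2 + x*z^2 + w^2*x + y*z^2 + w^2*y + 2*w*z^2 + 2*w^2*z))"
        by algebra
      from comb3[OF this h3 h2 h1] have "g dvd (b^2*(x+y+b*d))" .
      then have hs: "g dvd (x+y+b*d)" using nb by (auto simp: dmult dest: dpow)
      have "y + (x+e) = 1*(x+y+b*d) + 1*(b*d+e) + 2*(-(b*d))" by algebra
      from comb2[OF this hs he] have "g dvd (y + (x+e))" .
      then have y: "y = x+e" using eqF F4 addF eF by blast
      have "w + (z+e) = 1*(x+y+z+w) + 1*(x+y+b*d) + 1*(b*d+e) + 2*(-x-y-b*d)" by algebra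
      from comb3[OF this h1 hs he] have "g dvd (w + (z+e))" .
      then have w: "w = z+e" using eqF F4 addF eF by blast
      have "(x,z) \<in> ?U" using F4 h2 y w by auto
      then show "t \<in> (\<lambda>(x,z). (x, x+e, z, z+e)) ` ?U" unfolding t y w by force
    qed
    show "(\<lambda>(x,z). (x, x+e, z, z+e)) ` ?U \<subseteq> ?S"
    proof
      fix t assume "t \<in> (\<lambda>(x,z). (x, x+e, z, z+e)) ` ?U"
      then obtain x z where t: "t = (x, x+e, z, z+e)" and F2: "x\<in>F" "z\<in>F" and h2: "g dvd (x*(x+e)+z*(z+e)+b^2)" by auto
      have h1: "g dvd (x+(x+e)+z+(z+e))"
      proof -
        have "x+(x+e)+z+(z+e) = 0*0 + 2*(x+e+z)" by algebra
        then show ?thesis using comb1 by blast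
      qed
      have hs: "g dvd (x+(x+e)+b*d)"
      proof -
        have "x+(x+e)+b*d = 1*(b*d+e) + 2*x" by algebra
        from comb1[OF this he] show ?thesis .
      qed
      from comb3[OF cub[of x "x+e" z "z+e"] hs h2 h1] have h3: "g dvd (x^3+(x+e)^3+z^3+(z+e)^3+b^3*d)" .
      show "t \<in> ?S" unfolding t using F2 addF eF h1 h2 h3 by auto
    qed
  qed
  have inj1: "inj_on (\<lambda>(x,z). (x, x+e, z, z+e)) ?U" by (rule inj_onI) auto
  have U_eq: "?U = (\<lambda>(x,u). (x, x+u)) ` (F \<times> ?V)"
  proof
    show "?U \<subseteq> (\<lambda>(x,u). (x, x+u)) ` (F \<times> ?V)"
    proof
      fix t assume "t \<in> ?U"
      then obtain x z where t: "t = (x,z)" and F2: "x\<in>F" "z\<in>F" and h: "g dvd (x*(x+e)+z*(z+e)+b^2)" by auto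
      have "(x+z)^2+e*(x+z)+b^2 = 1*(x*(x+e)+z*(z+e)+b^2) + 2*(x*z)" by algebra
      from comb1[OF this h] have "x+z \<in> ?V" using F2 addF by auto
      moreover have "z = x + (x+z)" by (simp add: add.assoc[symmetric] bself)
      ultimately show "t \<in> (\<lambda>(x,u). (x, x+u)) ` (F \<times> ?V)" unfolding t using F2 by force
    qed
    show "(\<lambda>(x,u). (x, x+u)) ` (F \<times> ?V) \<subseteq> ?U"
    proof
      fix t assume "t \<in> (\<lambda>(x,u). (x, x+u)) ` (F \<times> ?V)"
      then obtain x u where t: "t = (x, x+u)" and F2: "x\<in>F" "u\<in>F" and h: "g dvd (u^2+e*u+b^2)" by auto
      have "x*(x+e)+(x+u)*((x+u)+e)+b^2 = 1*(u^2+e*u+b^2) + 2*(x*x + x*u + e*x)" by algebra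
      from comb1[OF this h] show "t \<in> ?U" unfolding t using F2 addF by auto
    qed
  qed
  have inj2: "inj_on (\<lambda>(x,u). (x, x+u)) (F \<times> ?V)" by (rule inj_onI) auto
  have "card ?S = card ?U" using S_eq card_image[OF inj1] by simp
  also have "\<dots> = card (F \<times> ?V)" using U_eq card_image[OF inj2] by simp
  also have "\<dots> = 2^m * card ?V" using cardF by (simp add: card_cartesian_product)
  also have "card ?V = card (Qs d)" using count_V[OF bF dF] unfolding e_def .
  finally show ?thesis .
qed

end



lemma rearr: "(u::'a::ab_group_add) = a - v - t \<Longrightarrow> v = a - t - u" by (simp add: algebra_simps)

lemma comb3g: assumes "E = c1 * A1 + c2 * A2 + c3 * A3 + 2 * R" "(g::bit poly) dvd A1" "g dvd A2" "g dvd A3" shows "g dvd E"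
proof - have "E = c1*A1 + c2*A2 + c3*A3" using assms(1) by (simp only: two0 mult_zero_left add_0_right)
  then show ?thesis using assms(2-4) by (metis dvd_add dvd_mult) qed

lemma sq_gen: "((a::'a::comm_ring_1)+b+2*c)^2 = a^2+b^2+2*(a*b) + 4*(a*c+b*c+c^2)" by (simp add: power2_eq_square algebra_simps)

lemma sum_pow: assumes "k \<ge> 1" shows "((X::4 poly)+Y)^(2^k) = X^(2^k) + Y^(2^k) + 2*(X*Y)^(2^(k-1))"
  using assms
proof (induct k rule: dec_induct)
  case base then show ?case by (simp add: power2_sum)
next
  case (step k)
  have "(X+Y)^(2^Suc k) = ((X+Y)^(2^k))^2" by (simp add: power_mult[symmetric] mult.commute)
  also have "\<dots> = (X^(2^k))^2 + (Y^(2^k))^2 + 2*(X^(2^k)*Y^(2^k))" unfolding step(3) sq_gen by (simp add: four0)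
  also have "\<dots> = X^(2^Suc k) + Y^(2^Suc k) + 2*(X*Y)^(2^(Suc k - 1))"
    by (simp add: power_mult[symmetric] mult.commute power_mult_distrib)
  finally show ?case .
qed

lemma card_transfer4:
  assumes "bij_betw h A B"
  shows "card {(a,b,c,e). a\<in>A \<and> b\<in>A \<and> c\<in>A \<and> e\<in>A \<and> P (h a) (h b) (h c) (h e)} =
         card {(a,b,c,e). a\<in>B \<and> b\<in>B \<and> c\<in>B \<and> e\<in>B \<and> P a b c e}"
proof -
  let ?S1 = "{(a,b,c,e). a\<in>A \<and> b\<in>A \<and> c\<in>A \<and> e\<in>A \<and> P (h a) (h b) (h c) (h e)}"
  let ?S2 = "{(a,b,c,e). a\<in>B \<and> b\<in>B \<and> c\<in>B \<and> e\<in>B \<and> P a b c e}"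
  let ?H = "\<lambda>(a,b,c,e). (h a, h b, h c, h e)"
  have inj: "inj_on h A" using assms bij_betw_def by blast
  have injH: "inj_on ?H ?S1" using inj by (auto simp: inj_on_def)
  have "?H ` ?S1 = ?S2"
  proof
    show "?H ` ?S1 \<subseteq> ?S2" using assms by (auto simp: bij_betw_def)
    show "?S2 \<subseteq> ?H ` ?S1"
    proof
      fix t assume "t \<in> ?S2"
      then obtain a b c e where t: "t = (a,b,c,e)" "a\<in>B" "b\<in>B" "c\<in>B" "e\<in>B" "P a b c e" by auto
      let ?i = "inv_into A h"
      have r: "\<And>y. y \<in> B \<Longrightarrow> h (?i y) = y" using assms bij_betw_inv_into_right by metis
      have i: "\<And>y. y \<in> B \<Longrightarrow> ?i y \<in> A" using assms by (metis bij_betw_def inv_into_into)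
      have "(?i a, ?i b, ?i c, ?i e) \<in> ?S1" using t r i by auto
      moreover have "t = ?H (?i a, ?i b, ?i c, ?i e)" using t r by auto
      ultimately show "t \<in> ?H ` ?S1" by blast
    qed
  qed
  then show ?thesis using card_image[OF injH] by simp
qed

context
  fixes m :: nat and f \<beta> :: "4 poly"
  assumes m1: "m \<ge> 1" and fmod: "GR_modulus m f" and ord: "GR_unit_of_order f \<beta> (2^m - 1)"
begin

lemma gprime: "prime_elem (redpoly f)"
  using fmod unfolding GR_modulus_def by (auto intro: field_poly_irreducible_imp_prime)

lemma teich_frob': "X \<in> Teich m f \<beta> \<Longrightarrow> f dvd (X^(2^m) - X)"
  using teich_frob[OF m1 fmod ord] .

lemma condR:
  assumes T: "X \<in> Teich m f \<beta>" "Y \<in> Teich m f \<beta>" "Z \<in> Teich m f \<beta>" "W \<in> Teich m f \<beta>"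
  shows "f dvd (X + Y - Z - W - 2 * B) \<longleftrightarrow>
    (redpoly f dvd (redpoly X + redpoly Y + redpoly Z + redpoly W) \<and>
     redpoly f dvd (redpoly X * redpoly Y + redpoly Z * redpoly W + (redpoly B)^2))"
proof -
  let ?g = "redpoly f"
  let ?q = "(2::nat)^m" and ?h = "(2::nat)^(m-1)"
  have qh: "?q = 2 * ?h" using m1 by (metis Suc_diff_1 le_less_trans less_one not_less power_Suc)
  define P where "P = (X*Y)^?h"
  define P' where "P' = (Z*W)^?h"
  define T1 where "T1 = (X^?q - X) + (Y^?q - Y) - (Z^?q - Z) - (W^?q - W)"
  have fT1: "f dvd T1" unfolding T1_def using teich_frob' T by (metis dvd_add dvd_diff)
  have LHS: "X + Y - Z - W - 2 * B = ((X+Y)^?q - (Z+W)^?q) - 2*(P - P' + B) - T1"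
    unfolding P_def P'_def T1_def sum_pow[OF m1] by (simp add: algebra_simps)
  let ?x = "redpoly X" and ?y = "redpoly Y" and ?z = "redpoly Z" and ?w = "redpoly W" and ?b = "redpoly B"
  have rs: "redpoly ((X+Y) - (Z+W)) = ?x + ?y + ?z + ?w" by (simp add: redpoly_diff redpoly_add add.assoc)
  have rl: "redpoly (X + Y - Z - W - 2 * B) = ?x + ?y + ?z + ?w"
    by (simp add: redpoly_diff redpoly_add redpoly_mult add.assoc)
  let ?a = "(?x*?y)^?h" and ?c = "(?z*?w)^?h"
  have rP: "redpoly (P - P' + B) = ?a + ?c + ?b"
    unfolding P_def P'_def by (simp add: redpoly_diff redpoly_add redpoly_power redpoly_mult)
  have a2: "?a^2 = (?x*?y)^?q" and c2: "?c^2 = (?z*?w)^?q"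
    by (simp_all add: power_mult[symmetric] qh mult.commute)
  have fr1: "?g dvd ((?x*?y)^?q + ?x*?y)" and fr2: "?g dvd ((?z*?w)^?q + ?z*?w)"
    using frob_F[OF m1 fmod ord] by (simp_all add: bdiff)
  have iden: "(?a+?c+?b)*(?a+?c+?b) = 1*((?x*?y)^?q + ?x*?y) + 1*((?z*?w)^?q + ?z*?w) + 1*(?x*?y+?z*?w+?b^2)
     + 2*(?a*?c+?a*?b+?c*?b - ?x*?y - ?z*?w)"
    unfolding a2[symmetric] c2[symmetric] by algebra
  have iden2: "?x*?y+?z*?w+?b^2 = 1*((?a+?c+?b)*(?a+?c+?b)) + 1*((?x*?y)^?q + ?x*?y) + 1*((?z*?w)^?q + ?z*?w)
     + 2*(-(?a*?c+?a*?b+?c*?b) - (?x*?y)^?q - (?z*?w)^?q)"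
    unfolding a2[symmetric] c2[symmetric] by algebra
  have g0: "?g \<noteq> 0" using gprime by auto
  have lift: "f dvd ((X+Y)^?q - (Z+W)^?q)" if "?g dvd (?x + ?y + ?z + ?w)"
    using pow2_lift[of f "X+Y" "Z+W" m] that rs m1 by simp
  show ?thesis
  proof
    assume h: "f dvd (X + Y - Z - W - 2 * B)"
    have s: "?g dvd (?x + ?y + ?z + ?w)" using dvd_redpoly[OF h] rl by simp
    have "2*(P - P' + B) = ((X+Y)^?q - (Z+W)^?q) - T1 - (X + Y - Z - W - 2 * B)" using rearr[OF LHS] .
    then have "f dvd 2*(P - P' + B)" using lift[OF s] fT1 h by (metis dvd_diff)
    then have "?g dvd redpoly (P - P' + B)" using two_dvd_iff[OF g0] by blast
    then have "?g dvd (?a + ?c + ?b)" unfolding rP .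
    then have "?g dvd ((?a+?c+?b)*(?a+?c+?b))" by simp
    from comb3g[OF iden2 this fr1 fr2] have "?g dvd (?x*?y+?z*?w+?b^2)" .
    then show "?g dvd (?x + ?y + ?z + ?w) \<and> ?g dvd (?x*?y+?z*?w+?b^2)" using s by simp
  next
    assume h: "?g dvd (?x + ?y + ?z + ?w) \<and> ?g dvd (?x*?y+?z*?w+?b^2)"
    then have "?g dvd ((?a+?c+?b)*(?a+?c+?b))" using comb3g[OF iden fr1 fr2] by blast
    then have "?g dvd (?a+?c+?b)" using gprime by (simp add: prime_elem_dvd_mult_iff)
    then have "?g dvd redpoly (P - P' + B)" unfolding rP .
    then have "f dvd 2*(P - P' + B)" using two_dvd_iff[OF g0] by blast
    then show "f dvd (X + Y - Z - W - 2 * B)" using LHS lift h fT1 by (metis dvd_diff)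
  qed
qed

end

theorem corollaryB9:
  fixes m :: nat and f \<beta> B :: "4 poly" and d :: "bit poly"
  assumes "odd m"
    and "GR_modulus m f"
    and "GR_unit_of_order f \<beta> (2 ^ m - 1)"
    and "B \<in> Teich m f \<beta>" and "B \<noteq> 0"
    and "d \<in> Fq_carrier m"
  defines "N \<equiv> card {(X, Y, Z, W). X \<in> Teich m f \<beta> \<and> Y \<in> Teich m f \<beta> \<and>
                 Z \<in> Teich m f \<beta> \<and> W \<in> Teich m f \<beta> \<and>
                 f dvd (X + Y - Z - W - 2 * B) \<and>
                 redpoly f dvd (redpoly X ^ 3 + redpoly Y ^ 3 + redpoly Z ^ 3 + redpoly W ^ 3
                                - redpoly B ^ 3 * d)}"
  shows "(d = 0 \<longrightarrow> N = 2 ^ m) \<and>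
         (d \<in> Mset m f 1 \<longrightarrow> N = 2 ^ (m + 1)) \<and>
         (d \<in> Mset m f 0 \<union> Mset m f 3 \<longrightarrow> N = 0)"
proof -
  note om = assms(1) and fmod = assms(2) and ord = assms(3) and BT = assms(4) and B0 = assms(5) and dF = assms(6)
  have m1: "m \<ge> 1" using om by (cases m) auto
  let ?g = "redpoly f"
  let ?T = "Teich m f \<beta>"
  have lf: "lead_coeff f = 1" and df: "degree f = m" using fmod unfolding GR_modulus_def by auto
  have dg: "degree ?g = m"
  proof -
    have "coeff ?g m = 1" using lf df unfolding redpoly_def by (simp add: coeff_map_poly)
    then have "m \<le> degree ?g" by (metis le_degree one_neq_zero)
    moreover have "degree ?g \<le> m" using df unfolding redpoly_def by (metis map_poly_degree_leq)
    ultimately show ?thesis by simp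
  qed
  interpret ff ?g m
    by unfold_locales (use gprime[OF m1 fmod ord] dg om frob_F[OF m1 fmod ord] in auto)
  let ?b = "redpoly B"
  have bij: "bij_betw redpoly ?T F" using red_bij[OF m1 fmod ord] .
  have bF: "?b \<in> F" using bij BT by (auto simp: bij_betw_def)
  have zT: "0 \<in> ?T" using m1 unfolding Teich_def GR_carrier_def by auto
  have b0: "?b \<noteq> 0"
  proof
    assume "?b = 0"
    then have "redpoly B = redpoly 0" by simp
    then show False using bij BT zT B0 unfolding bij_betw_def inj_on_def by blast
  qed
  define \<Phi> where "\<Phi> = (\<lambda>x y z w. ?g dvd (x+y+z+w) \<and> ?g dvd (x*y+z*w+?b^2) \<and> ?g dvd (x^3+y^3+z^3+w^3+?b^3*d))"
  have key: "\<And>X Y Z W. (X \<in> ?T \<and> Y \<in> ?T \<and> Z \<in> ?T \<and> W \<in> ?T \<and>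
                 f dvd (X + Y - Z - W - 2 * B) \<and>
                 ?g dvd (redpoly X ^ 3 + redpoly Y ^ 3 + redpoly Z ^ 3 + redpoly W ^ 3 - ?b ^ 3 * d))
      = (X \<in> ?T \<and> Y \<in> ?T \<and> Z \<in> ?T \<and> W \<in> ?T \<and> \<Phi> (redpoly X) (redpoly Y) (redpoly Z) (redpoly W))"
    unfolding \<Phi>_def using condR[OF m1 fmod ord] by (auto simp: bdiff)
  have "N = card {(X, Y, Z, W). X \<in> ?T \<and> Y \<in> ?T \<and> Z \<in> ?T \<and> W \<in> ?T \<and> \<Phi> (redpoly X) (redpoly Y) (redpoly Z) (redpoly W)}"
    unfolding N_def by (simp only: key)
  also have "\<dots> = card {(x, y, z, w). x \<in> F \<and> y \<in> F \<and> z \<in> F \<and> w \<in> F \<and> \<Phi> x y z w}"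
    by (rule card_transfer4[OF bij])
  also have "\<dots> = 2^m * card (Qs d)" unfolding \<Phi>_def using count_main[OF bF b0 dF] by simp
  finally have N: "N = 2^m * card (Qs d)" .
  have M: "d \<in> Mset m f i \<longleftrightarrow> d \<noteq> 0 \<and> card (Cs d) = i" for i
    using dF unfolding Mset_def Cs_def by auto
  show ?thesis using F_main[OF dF] N M by auto
qed


end
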